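(* Let $n\ge 2$, let $A$ be a Hermitian matrix of order $n$ and let $\mathcal{O}\in\mathcal{C}_c^{(n)}$. Suppose $A'$ is obtained from $A$ by applying one cycle ($N=n(n-1)/2$ steps) of the cyclic complex Jacobi method defined by the strategy $I_{\mathcal{O}}$. If all rotation angles satisfy $|\cos\phi_k|\ge\nu>0$, $k\ge 0$, then there is a constant $\gamma_{n,\nu}$ depending only on $n$ and $\nu$ such that $$S^2(A')\le\gamma_{n,\nu}S^2(A),\qquad 0\le\gamma_{n,\nu}<1.$$
   Context: $\imath=\sqrt{-1}$. For $1\le i<j\le n$ and real $\phi,\alpha$, $R(i,j,\phi,\alpha)$ is the $n\times n$ matrix equal to $I_n$ except for entries $(i,i)=(j,j)=\cos\phi$, $(i,j)=-e^{\imath\alpha}\sin\phi$, $(j,i)=e^{-\imath\alpha}\sin\phi$. The off-norm is $S(X)=\|X-\mathrm{diag}(X)\|_F$. The complex Jacobi method on a Hermitian $A$ is the iteration $A^{(0)}=A$, $A^{(k+1)}=U_k^*A^{(k)}U_k$, where $U_k=R(i_k,j_k,\phi_k,\alpha_k)$ and the angles $\phi_k,\alpha_k$ are chosen so that the pivot entry in position $(i_k,j_k)$ (and hence $(j_k,i_k)$) of $A^{(k+1)}$ is zero. Let $\mathcal{P}_n=\{(r,s):1\le r<s\le n\}$ and $N=n(n-1)/2$. For an ordering $\mathcal{O}=(i_0,j_0),\dots,(i_{N-1},j_{N-1})$ of $\mathcal{P}_n$ (each pair appearing exactly once), the cyclic strategy $I_{\mathcal{O}}$ takes as $k$-th pivot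 pair $(i_{k\bmod N},j_{k\bmod N})$; one cycle consists of $N$ consecutive steps. $\mathcal{C}_c^{(n)}$ (column-wise orderings with permutations) is the set of orderings of the form $(1,2),(\tau_3(1),3),(\tau_3(2),3),\dots,(\tau_n(1),n),\dots,(\tau_n(n-1),n)$, where each $\tau_j$ is a permutation of $\{1,\dots,j-1\}$, $3\le j\le n$. *)

theory Defs
  imports "HOL-Analysis.Analysis" "HOL-Combinatorics.Permutations"
begin

text \<open>Matrices of order n are represented as functions nat => nat => complex,
  with (1-based) indices ranging over {1..n}; entries outside are irrelevant.\<close>

type_synonym cmatrix = "nat \<Rightarrow> nat \<Rightarrow> complex"

definition mmult :: "nat \<Rightarrow> cmatrix \<Rightarrow> cmatrix \<Rightarrow> cmatrix" where
  "mmult n X Y = (\<lambda>r c. \<Sum>k=1..n. X r k * Y k c)"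

definition cadj :: "cmatrix \<Rightarrow> cmatrix" where
  "cadj X = (\<lambda>r c. cnj (X c r))"

definition hermitian :: "nat \<Rightarrow> cmatrix \<Rightarrow> bool" where
  "hermitian n X \<longleftrightarrow> (\<forall>r\<in>{1..n}. \<forall>c\<in>{1..n}. X r c = cnj (X c r))"

definition rot :: "nat \<Rightarrow> nat \<Rightarrow> real \<Rightarrow> real \<Rightarrow> cmatrix" where
  "rot i j \<phi> \<alpha> = (\<lambda>r c.
     if (r = i \<and> c = i) \<or> (r = j \<and> c = j) then complex_of_real (cos \<phi>)
     else if r = i \<and> c = j then - exp (\<i> * complex_of_real \<alpha>) * complex_of_real (sin \<phi>)
     else if r = j \<and> c = i then exp (- \<i> * complex_of_real \<alpha>) * complex_of_real (sin \<phi>)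
     else if r = c then 1 else 0)"

definition off_norm :: "nat \<Rightarrow> cmatrix \<Rightarrow> real" where
  "off_norm n X = sqrt (\<Sum>r=1..n. \<Sum>c=1..n. if r \<noteq> c then (cmod (X r c))\<^sup>2 else 0)"

definition col_orderings :: "nat \<Rightarrow> (nat \<times> nat) list set" where
  "col_orderings n = {(1,2) # concat (map (\<lambda>j. map (\<lambda>i. (\<tau> j i, j)) [1..<j]) [3..<Suc n]) | \<tau>.
      \<forall>j\<in>{3..n}. \<tau> j permutes {1..<j}}"

definition jacobi_one_cycle ::
  "nat \<Rightarrow> (nat \<times> nat) list \<Rightarrow> real \<Rightarrow> cmatrix \<Rightarrow> cmatrix \<Rightarrow> bool" where
  "jacobi_one_cycle n ord \<nu> A A' \<longleftrightarrow>
     (\<exists>As :: nat \<Rightarrow> cmatrix. \<exists>\<phi> \<alpha> :: nat \<Rightarrow> real.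
        As 0 = A \<and>
        (\<forall>k < n * (n - 1) div 2.
           (let U = rot (fst (ord ! k)) (snd (ord ! k)) (\<phi> k) (\<alpha> k) in
              As (Suc k) = mmult n (cadj U) (mmult n (As k) U)) \<and>
           As (Suc k) (fst (ord ! k)) (snd (ord ! k)) = 0 \<and>
           \<bar>cos (\<phi> k)\<bar> \<ge> \<nu>) \<and>
        A' = As (n * (n - 1) div 2))"

end

theory Submission
  imports Defs
begin


lemma sum2:
  fixes n :: nat
  assumes "i \<noteq> j" "i \<in> {1..n}" "j \<in> {1..n}"
  shows "(\<Sum>l=1..n. f l * (if l = i then c else if l = j then d else 0)) = c * f i + d * (f j :: complex)"
proof -
  have "(\<Sum>l=1..n. f l * (if l = i then c else if l = j then d else 0))
     = (\<Sum>l=1..n. (if l = i then c * f i else 0) + (if l = j then d * f j else 0))"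
    by (rule sum.cong) (use assms in auto)
  also have "\<dots> = (\<Sum>l=1..n. (if l = i then c * f i else 0)) + (\<Sum>l=1..n. (if l = j then d * f j else 0))"
    by (rule sum.distrib)
  also have "\<dots> = c * f i + d * f j" using assms by (simp only: sum.delta finite_atLeastAtMost) simp
  finally show ?thesis .
qed

lemma sum2':
  fixes n :: nat
  assumes "i \<noteq> j" "i \<in> {1..n}" "j \<in> {1..n}"
  shows "(\<Sum>l=1..n. (if l = i then c else if l = j then d else 0) * f l) = c * f i + d * (f j :: complex)"
  using sum2[OF assms, of f c d] by (simp add: mult.commute)

lemma mm_other:
  assumes "b \<in> {1..n}" "b \<noteq> i" "b \<noteq> j"
  shows "mmult n X (rot i j p a) r b = X r b"
proof -
  have "mmult n X (rot i j p a) r b = (\<Sum>l=1..n. if l = b then X r b else 0)"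
    unfolding mmult_def by (rule sum.cong) (use assms in \<open>auto simp: rot_def\<close>)
  also have "\<dots> = X r b" using assms by (simp add: sum.delta)
  finally show ?thesis .
qed

lemma mm_i:
  assumes "i \<noteq> j" "i \<in> {1..n}" "j \<in> {1..n}"
  shows "mmult n X (rot i j p a) r i = of_real (cos p) * X r i + exp (- \<i> * of_real a) * of_real (sin p) * X r j"
proof -
  have "mmult n X (rot i j p a) r i = (\<Sum>l=1..n. X r l * (if l = i then of_real (cos p) else if l = j then exp (- \<i> * of_real a) * of_real (sin p) else 0))"
    unfolding mmult_def by (rule sum.cong) (use assms in \<open>auto simp: rot_def\<close>)
  also have "\<dots> = of_real (cos p) * X r i + exp (- \<i> * of_real a) * of_real (sin p) * X r j" by (rule sum2[OF assms])
  finally show ?thesis .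
qed

lemma mm_j:
  assumes "i \<noteq> j" "i \<in> {1..n}" "j \<in> {1..n}"
  shows "mmult n X (rot i j p a) r j = - exp (\<i> * of_real a) * of_real (sin p) * X r i + of_real (cos p) * X r j"
proof -
  have "mmult n X (rot i j p a) r j = (\<Sum>l=1..n. X r l * (if l = j then of_real (cos p) else if l = i then - exp (\<i> * of_real a) * of_real (sin p) else 0))"
    unfolding mmult_def by (rule sum.cong) (use assms in \<open>auto simp: rot_def\<close>)
  also have "\<dots> = of_real (cos p) * X r j + (- exp (\<i> * of_real a) * of_real (sin p)) * X r i" by (rule sum2) (use assms in auto)
  finally show ?thesis by (simp add: add.commute)
qed

lemma ma_other:
  assumes "r \<in> {1..n}" "r \<noteq> i" "r \<noteq> j"
  shows "mmult n (cadj (rot i j p a)) Y r b = Y r b"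
proof -
  have "mmult n (cadj (rot i j p a)) Y r b = (\<Sum>l=1..n. if l = r then Y r b else 0)"
    unfolding mmult_def by (rule sum.cong) (use assms in \<open>auto simp: rot_def cadj_def\<close>)
  also have "\<dots> = Y r b" using assms by (simp add: sum.delta)
  finally show ?thesis .
qed

lemma ma_i:
  assumes "i \<noteq> j" "i \<in> {1..n}" "j \<in> {1..n}"
  shows "mmult n (cadj (rot i j p a)) Y i b = of_real (cos p) * Y i b + exp (\<i> * of_real a) * of_real (sin p) * Y j b"
proof -
  have "mmult n (cadj (rot i j p a)) Y i b = (\<Sum>l=1..n. (if l = i then of_real (cos p) else if l = j then exp (\<i> * of_real a) * of_real (sin p) else 0) * Y l b)"
    unfolding mmult_def by (rule sum.cong) (use assms in \<open>auto simp: rot_def cadj_def exp_cnj\<close>)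
  also have "\<dots> = of_real (cos p) * Y i b + exp (\<i> * of_real a) * of_real (sin p) * Y j b" by (rule sum2'[OF assms])
  finally show ?thesis .
qed

lemma ma_j:
  assumes "i \<noteq> j" "i \<in> {1..n}" "j \<in> {1..n}"
  shows "mmult n (cadj (rot i j p a)) Y j b = - exp (- \<i> * of_real a) * of_real (sin p) * Y i b + of_real (cos p) * Y j b"
proof -
  have "mmult n (cadj (rot i j p a)) Y j b = (\<Sum>l=1..n. (if l = j then of_real (cos p) else if l = i then - exp (- \<i> * of_real a) * of_real (sin p) else 0) * Y l b)"
    unfolding mmult_def by (rule sum.cong) (use assms in \<open>auto simp: rot_def cadj_def exp_cnj\<close>)
  also have "\<dots> = of_real (cos p) * Y j b + (- exp (- \<i> * of_real a) * of_real (sin p)) * Y i b" by (rule sum2') (use assms in auto)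
  finally show ?thesis by (simp add: add.commute)
qed

lemma normpres:
  fixes x y w :: complex and c s :: real
  assumes "c\<^sup>2 + s\<^sup>2 = 1" "cmod w = 1"
  shows "(cmod (of_real c * x + cnj w * of_real s * y))\<^sup>2 + (cmod (- w * of_real s * x + of_real c * y))\<^sup>2
       = (cmod x)\<^sup>2 + (cmod y)\<^sup>2"
proof -
  have w: "w * cnj w = 1" using assms(2) complex_norm_square[of w] by simp
  have w': "w * (z * (cnj w * t)) = z * t" for z t by (metis w mult.assoc mult.commute mult.left_commute mult_1)
  have cs: "(of_real c :: complex)^2 + (of_real s)^2 = 1" using assms(1)
    by (metis of_real_1 of_real_add of_real_power)
  have "complex_of_real ((cmod (of_real c * x + cnj w * of_real s * y))\<^sup>2 + (cmod (- w * of_real s * x + of_real c * y))\<^sup>2)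
     = (of_real c * x + cnj w * of_real s * y) * cnj (of_real c * x + cnj w * of_real s * y)
       + (- w * of_real s * x + of_real c * y) * cnj (- w * of_real s * x + of_real c * y)"
    by (simp only: of_real_add complex_norm_square)
  also have "\<dots> = ((of_real c)^2 + (of_real s)^2) * (x * cnj x) + ((of_real c)^2 + (of_real s)^2 * (w * cnj w)) * (y * cnj y)"
    by (simp add: algebra_simps power2_eq_square w w')
  also have "\<dots> = x * cnj x + y * cnj y" by (simp add: cs w)
  also have "\<dots> = complex_of_real ((cmod x)\<^sup>2 + (cmod y)\<^sup>2)"
    by (simp only: of_real_add complex_norm_square)
  finally show ?thesis using of_real_eq_iff by blast
qed

lemma np1:
  "(cmod (of_real (cos p) * x + exp (- \<i> * of_real a) * of_real (sin p) * y))\<^sup>2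
   + (cmod (- exp (\<i> * of_real a) * of_real (sin p) * x + of_real (cos p) * y))\<^sup>2
   = (cmod x)\<^sup>2 + (cmod y)\<^sup>2"
proof -
  have "cnj (exp (\<i> * of_real a)) = exp (- \<i> * of_real a)" by (simp add: exp_cnj)
  then show ?thesis using normpres[of "cos p" "sin p" "exp (\<i> * of_real a)" x y]
    by (simp add: norm_exp_i_times)
qed

lemma np2:
  "(cmod (of_real (cos p) * x + exp (\<i> * of_real a) * of_real (sin p) * y))\<^sup>2
   + (cmod (- exp (- \<i> * of_real a) * of_real (sin p) * x + of_real (cos p) * y))\<^sup>2
   = (cmod x)\<^sup>2 + (cmod y)\<^sup>2"
proof -
  have "cnj (exp (- \<i> * of_real a)) = exp (\<i> * of_real a)" by (simp add: exp_cnj)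
  moreover have "cmod (exp (- \<i> * of_real a)) = 1"
    using norm_exp_i_times[of "-a"] by simp
  ultimately show ?thesis using normpres[of "cos p" "sin p" "exp (- \<i> * of_real a)" x y]
    by simp
qed

lemma herm_pres:
  assumes "hermitian n X"
  shows "hermitian n (mmult n (cadj U) (mmult n X U))"
  unfolding hermitian_def
proof (intro ballI)
  fix r c assume r: "r \<in> {1..n}" and c: "c \<in> {1..n}"
  have "cnj (mmult n (cadj U) (mmult n X U) c r)
      = (\<Sum>k=1..n. \<Sum>l=1..n. U k c * (cnj (X k l) * cnj (U l r)))"
    by (simp add: mmult_def cadj_def sum_distrib_left)
  also have "\<dots> = (\<Sum>k=1..n. \<Sum>l=1..n. U k c * (X l k * cnj (U l r)))"
    using assms unfolding hermitian_def
    by (intro sum.cong refl) (metis complex_cnj_cnj)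
  also have "\<dots> = (\<Sum>l=1..n. \<Sum>k=1..n. U k c * (X l k * cnj (U l r)))"
    by (rule sum.swap)
  also have "\<dots> = mmult n (cadj U) (mmult n X U) r c"
    by (simp add: mmult_def cadj_def sum_distrib_left algebra_simps)
  finally show "mmult n (cadj U) (mmult n X U) r c = cnj (mmult n (cadj U) (mmult n X U) c r)"
    by simp
qed

lemma dec1:
  assumes "finite S" "i \<in> S" "j \<in> S" "i \<noteq> j"
  shows "(\<Sum>r\<in>S. g r) = (\<Sum>r\<in>S-{i,j}. g r) + g i + (g j :: real)"
proof -
  have S: "S = insert i (insert j (S-{i,j}))" using assms by auto
  show ?thesis using assms by (subst S) (simp add: sum.insert)
qed

lemma dec2:
  assumes "finite S" "i \<in> S" "j \<in> S" "i \<noteq> j"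
  shows "(\<Sum>r\<in>S. \<Sum>c\<in>S. if r \<noteq> c then g r c else 0) =
     (\<Sum>r\<in>S-{i,j}. \<Sum>c\<in>S-{i,j}. if r \<noteq> c then g r c else 0)
     + (\<Sum>r\<in>S-{i,j}. g r i + g r j) + (\<Sum>c\<in>S-{i,j}. g i c + g j c) + g i j + (g j i :: real)"
proof -
  define S' where "S' = S - {i,j}"
  have S: "S = insert i (insert j S')" using assms unfolding S'_def by auto
  have f: "finite S'" "i \<notin> S'" "j \<notin> S'" using assms unfolding S'_def by auto
  have inner: "(\<Sum>c\<in>S. if r \<noteq> c then g r c else 0) = (\<Sum>c\<in>S'. if r \<noteq> c then g r c else 0) + g r i + g r j"
    if "r \<in> S'" for r
    using f assms that by (subst S) (auto simp: sum.insert)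
  have ii: "(\<Sum>c\<in>S. if i \<noteq> c then g i c else 0) = (\<Sum>c\<in>S'. g i c) + g i j"
    using f assms by (subst S) (auto simp: sum.insert intro!: sum.cong)
  have jj: "(\<Sum>c\<in>S. if j \<noteq> c then g j c else 0) = (\<Sum>c\<in>S'. g j c) + g j i"
    using f assms by (subst S) (auto simp: sum.insert intro!: sum.cong)
  have "(\<Sum>r\<in>S. \<Sum>c\<in>S. if r \<noteq> c then g r c else 0) =
      (\<Sum>c\<in>S. if i \<noteq> c then g i c else 0) + (\<Sum>c\<in>S. if j \<noteq> c then g j c else 0)
      + (\<Sum>r\<in>S'. \<Sum>c\<in>S. if r \<noteq> c then g r c else 0)"
    using f assms by (subst (1) S) (simp add: sum.insert)
  also have "(\<Sum>r\<in>S'. \<Sum>c\<in>S. if r \<noteq> c then g r c else 0) =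
      (\<Sum>r\<in>S'. (\<Sum>c\<in>S'. if r \<noteq> c then g r c else 0) + (g r i + g r j))"
    using inner by (intro sum.cong) auto
  finally show ?thesis unfolding S'_def[symmetric] ii jj
    by (simp add: sum.distrib)
qed

definition blk :: "nat \<Rightarrow> cmatrix \<Rightarrow> real" where
  "blk m X = (\<Sum>r=1..m. \<Sum>c=1..m. if r \<noteq> c then (cmod (X r c))\<^sup>2 else 0)"

definition col :: "nat \<Rightarrow> cmatrix \<Rightarrow> real" where
  "col J X = (\<Sum>r=1..<J. (cmod (X r J))\<^sup>2)"

lemma blk_step:
  fixes X :: cmatrix and n m i j J :: nat and p a :: real
  defines "X' \<equiv> mmult n (cadj (rot i j p a)) (mmult n X (rot i j p a))"
  assumes "i \<noteq> j" "i \<in> {1..m}" "j \<in> {1..m}" "m \<le> n"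
  shows "blk m X' + (cmod (X i j))\<^sup>2 + (cmod (X j i))\<^sup>2 = blk m X + (cmod (X' i j))\<^sup>2 + (cmod (X' j i))\<^sup>2"
proof -
  let ?S = "{1..m}" let ?S' = "{1..m} - {i,j}"
  have ij: "i \<in> {1..n}" "j \<in> {1..n}" using assms by auto
  have e1: "(\<Sum>r\<in>?S'. \<Sum>c\<in>?S'. if r \<noteq> c then (cmod (X' r c))\<^sup>2 else 0)
     = (\<Sum>r\<in>?S'. \<Sum>c\<in>?S'. if r \<noteq> c then (cmod (X r c))\<^sup>2 else 0)"
    unfolding X'_def using assms
    by (intro sum.cong refl) (auto simp: ma_other mm_other)
  have e2: "(\<Sum>r\<in>?S'. (cmod (X' r i))\<^sup>2 + (cmod (X' r j))\<^sup>2)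
     = (\<Sum>r\<in>?S'. (cmod (X r i))\<^sup>2 + (cmod (X r j))\<^sup>2)"
    unfolding X'_def using assms ij
    by (intro sum.cong refl) (auto simp: ma_other mm_i mm_j np1[simplified])
  have e3: "(\<Sum>c\<in>?S'. (cmod (X' i c))\<^sup>2 + (cmod (X' j c))\<^sup>2)
     = (\<Sum>c\<in>?S'. (cmod (X i c))\<^sup>2 + (cmod (X j c))\<^sup>2)"
    unfolding X'_def using assms ij
    by (intro sum.cong refl) (auto simp: ma_i ma_j mm_other np2[simplified])
  show ?thesis unfolding blk_def
    using dec2[of ?S i j "\<lambda>r c. (cmod (X' r c))\<^sup>2"] dec2[of ?S i j "\<lambda>r c. (cmod (X r c))\<^sup>2"]
      assms e1 e2 e3
    by simp
qed

lemma col_step: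
  fixes X :: cmatrix and n m i j J :: nat and p a :: real
  defines "X' \<equiv> mmult n (cadj (rot i j p a)) (mmult n X (rot i j p a))"
  assumes "i \<noteq> j" "i \<in> {1..<J}" "j \<in> {1..<J}" "J \<le> n"
  shows "col J X' = col J X"
proof -
  let ?S = "{1..<J}" let ?S' = "{1..<J} - {i,j}"
  have ij: "i \<in> {1..n}" "j \<in> {1..n}" "J \<in> {1..n}" "J \<noteq> i" "J \<noteq> j" using assms by auto
  have e1: "(\<Sum>r\<in>?S'. (cmod (X' r J))\<^sup>2) = (\<Sum>r\<in>?S'. (cmod (X r J))\<^sup>2)"
    unfolding X'_def using assms ij
    by (intro sum.cong refl) (auto simp: ma_other mm_other)
  have e2: "(cmod (X' i J))\<^sup>2 + (cmod (X' j J))\<^sup>2 = (cmod (X i J))\<^sup>2 + (cmod (X j J))\<^sup>2"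
    unfolding X'_def using assms ij by (simp add: ma_i ma_j mm_other np2[simplified])
  show ?thesis unfolding col_def
    using dec1[of ?S i j "\<lambda>r. (cmod (X' r J))\<^sup>2"] dec1[of ?S i j "\<lambda>r. (cmod (X r J))\<^sup>2"]
      assms e1 e2
    by simp
qed

definition tri :: "nat \<Rightarrow> nat" where "tri m = m * (m - 1) div 2"

lemma tri_Suc: "tri (Suc m) = tri m + m"
proof -
  have "Suc m * m = m * (m - 1) + 2 * m" by (cases m) auto
  then show ?thesis unfolding tri_def by simp
qed

lemma tri_mono: "m \<le> n \<Longrightarrow> tri m \<le> tri n"
  by (induction n) (auto simp: tri_Suc le_Suc_eq)

lemma tri_0: "tri 0 = 0" and tri_1: "tri 1 = 0" by (auto simp: tri_def)

lemma entry_le_blk: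
  assumes "r \<in> {1..m}" "q \<in> {1..m}" "r \<noteq> q"
  shows "cmod (X r q) \<le> sqrt (blk m X)"
proof -
  have "(cmod (X r q))\<^sup>2 = (if r \<noteq> q then (cmod (X r q))\<^sup>2 else 0)" using assms by simp
  also have "\<dots> \<le> (\<Sum>c=1..m. if r \<noteq> c then (cmod (X r c))\<^sup>2 else 0)"
    using assms by (intro member_le_sum[where f="\<lambda>c. if r \<noteq> c then (cmod (X r c))\<^sup>2 else 0"]) auto
  also have "\<dots> \<le> blk m X" unfolding blk_def
    using assms by (intro member_le_sum[where f="\<lambda>r. \<Sum>c=1..m. if r \<noteq> c then (cmod (X r c))\<^sup>2 else 0"])
      (auto intro: sum_nonneg)
  finally show ?thesis by (simp add: real_le_rsqrt)
qed

lemma blk_nonneg: "0 \<le> blk m X"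
  unfolding blk_def by (intro sum_nonneg) auto

lemma blk_Suc:
  assumes "hermitian n X" "Suc m \<le> n"
  shows "blk (Suc m) X = blk m X + 2 * col (Suc m) X"
proof -
  have h: "cmod (X (Suc m) r) = cmod (X r (Suc m))" if "r \<in> {1..m}" for r
    using assms that unfolding hermitian_def by (metis atLeastAtMost_iff complex_mod_cnj le_Suc_eq order.trans)
  have "blk (Suc m) X = (\<Sum>r=1..m. (\<Sum>c=1..m. if r \<noteq> c then (cmod (X r c))\<^sup>2 else 0) + (cmod (X r (Suc m)))\<^sup>2)
       + (\<Sum>c=1..m. (cmod (X (Suc m) c))\<^sup>2)"
    unfolding blk_def by (simp add: sum.atLeast_Suc_atMost_Suc_shift atLeastAtMostSuc_conv sum.insert)
      (auto intro!: sum.cong)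
  also have "\<dots> = blk m X + 2 * col (Suc m) X"
    unfolding blk_def col_def using h
    by (simp add: sum.distrib atLeastLessThanSuc_atLeastAtMost)
  finally show ?thesis .
qed

lemma lowb:
  fixes x y :: complex and c s \<nu> a :: real
  assumes "\<nu> \<le> \<bar>c\<bar>" "\<bar>s\<bar> \<le> 1" "0 \<le> \<nu>"
  shows "\<nu> * cmod y - cmod x \<le> cmod (- exp (\<i> * of_real a) * of_real s * x + of_real c * y)"
proof -
  let ?W = "- exp (\<i> * of_real a) * of_real s * x + of_real c * y"
  have e: "of_real c * y = ?W + exp (\<i> * of_real a) * of_real s * x" by simp
  have "cmod (of_real c * y) \<le> cmod ?W + cmod (exp (\<i> * of_real a) * of_real s * x)"
    by (subst e) (rule norm_triangle_ineq)
  moreover have "cmod (exp (\<i> * of_real a) * of_real s * x) \<le> cmod x"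
    using assms by (simp add: norm_mult norm_exp_i_times mult_left_le_one_le)
  moreover have "\<nu> * cmod y \<le> cmod (of_real c * y)"
    using assms by (simp add: norm_mult mult_right_mono)
  ultimately show ?thesis by linarith
qed



locale jac =
  fixes n :: nat and \<nu> :: real and As :: "nat \<Rightarrow> cmatrix" and ph al :: "nat \<Rightarrow> real"
    and \<tau> :: "nat \<Rightarrow> nat \<Rightarrow> nat"
  assumes nupos: "0 < \<nu>" and nule: "\<nu> \<le> 1"
  and perm: "\<And>m. 1 \<le> m \<Longrightarrow> m < n \<Longrightarrow> \<tau> (Suc m) permutes {1..<Suc m}"
  and hermA: "\<And>k. k \<le> tri n \<Longrightarrow> hermitian n (As k)"
  and stepA: "\<And>m l. 1 \<le> m \<Longrightarrow> m < n \<Longrightarrow> l < m \<Longrightarrow>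
     As (Suc (tri m + l)) = mmult n (cadj (rot (\<tau> (Suc m) (Suc l)) (Suc m) (ph (tri m + l)) (al (tri m + l))))
        (mmult n (As (tri m + l)) (rot (\<tau> (Suc m) (Suc l)) (Suc m) (ph (tri m + l)) (al (tri m + l))))"
  and zeroA: "\<And>m l. 1 \<le> m \<Longrightarrow> m < n \<Longrightarrow> l < m \<Longrightarrow> As (Suc (tri m + l)) (\<tau> (Suc m) (Suc l)) (Suc m) = 0"
  and cosA: "\<And>m l. 1 \<le> m \<Longrightarrow> m < n \<Longrightarrow> l < m \<Longrightarrow> \<nu> \<le> \<bar>cos (ph (tri m + l))\<bar>"
begin

definition B :: "nat \<Rightarrow> nat \<Rightarrow> cmatrix" where "B m l = As (tri m + l)"
definition p :: "nat \<Rightarrow> nat \<Rightarrow> nat" where "p m l = \<tau> (Suc m) (Suc l)"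

lemma p_in: "1 \<le> m \<Longrightarrow> m < n \<Longrightarrow> l < m \<Longrightarrow> p m l \<in> {1..m}"
  using permutes_in_image[OF perm, of m "Suc l"] unfolding p_def by auto

lemma p_inj: "1 \<le> m \<Longrightarrow> m < n \<Longrightarrow> l < m \<Longrightarrow> l' < m \<Longrightarrow> p m l = p m l' \<Longrightarrow> l = l'"
  using permutes_inj[OF perm, of m] unfolding p_def inj_def by fastforce

lemma B_step: "1 \<le> m \<Longrightarrow> m < n \<Longrightarrow> l < m \<Longrightarrow>
  B m (Suc l) = mmult n (cadj (rot (p m l) (Suc m) (ph (tri m + l)) (al (tri m + l))))
        (mmult n (B m l) (rot (p m l) (Suc m) (ph (tri m + l)) (al (tri m + l))))"
proof -
  assume a: "1 \<le> m" "m < n" "l < m"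
  have e: "B m (Suc l) = As (Suc (tri m + l))" by (simp add: B_def)
  show ?thesis unfolding e using stepA[OF a] by (simp add: B_def p_def)
qed

lemma B_herm: "m < n \<Longrightarrow> l \<le> m \<Longrightarrow> hermitian n (B m l)"
  unfolding B_def using tri_mono[of "Suc m" n] by (intro hermA) (auto simp: tri_Suc)

lemma B_zero: "1 \<le> m \<Longrightarrow> m < n \<Longrightarrow> l < m \<Longrightarrow> B m (Suc l) (p m l) (Suc m) = 0"
proof -
  assume a: "1 \<le> m" "m < n" "l < m"
  have e: "B m (Suc l) = As (Suc (tri m + l))" by (simp add: B_def)
  show ?thesis unfolding e p_def by (rule zeroA[OF a])
qed

lemma B_zero': "1 \<le> m \<Longrightarrow> m < n \<Longrightarrow> l < m \<Longrightarrow> B m (Suc l) (Suc m) (p m l) = 0"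
proof -
  assume a: "1 \<le> m" "m < n" "l < m"
  have "B m (Suc l) (Suc m) (p m l) = cnj (B m (Suc l) (p m l) (Suc m))"
  proof -
    have H: "\<forall>r\<in>{1..n}. \<forall>c\<in>{1..n}. B m (Suc l) r c = cnj (B m (Suc l) c r)"
    proof -
      have "hermitian n (B m (Suc l))" by (rule B_herm) (use a in auto)
      then show ?thesis unfolding hermitian_def .
    qed
    have "Suc m \<in> {1..n}" "p m l \<in> {1..n}" using p_in[OF a] a by auto
    then show ?thesis using H by blast
  qed
  then show ?thesis using B_zero[OF a] by simp
qed

lemma blk_col_step:
  assumes a: "1 \<le> m" "m < n" "l < m"
  shows "blk (Suc m) (B m (Suc l)) + 2 * (cmod (B m l (p m l) (Suc m)))\<^sup>2 = blk (Suc m) (B m l)"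
proof -
  have pi: "p m l \<in> {1..Suc m}" "p m l \<noteq> Suc m" using p_in[OF a] by auto
  have h: "cmod (B m l (Suc m) (p m l)) = cmod (B m l (p m l) (Suc m))"
  proof -
    have "hermitian n (B m l)" by (rule B_herm) (use a in auto)
    then have H: "\<forall>r\<in>{1..n}. \<forall>c\<in>{1..n}. B m l r c = cnj (B m l c r)" unfolding hermitian_def .
    have "Suc m \<in> {1..n}" "p m l \<in> {1..n}" using p_in[OF a] a by auto
    then have "B m l (Suc m) (p m l) = cnj (B m l (p m l) (Suc m))" using H by blast
    then show ?thesis by simp
  qed
  have st: "blk (Suc m) (B m (Suc l)) + (cmod (B m l (p m l) (Suc m)))\<^sup>2 + (cmod (B m l (Suc m) (p m l)))\<^sup>2
     = blk (Suc m) (B m l) + (cmod (B m (Suc l) (p m l) (Suc m)))\<^sup>2 + (cmod (B m (Suc l) (Suc m) (p m l)))\<^sup>2"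
    unfolding B_step[OF a]
    by (rule blk_step) (use pi a in auto)
  show ?thesis using st h B_zero[OF a] B_zero'[OF a] by simp
qed

lemma blk_col_sum:
  assumes a: "1 \<le> m" "m < n" "k \<le> m"
  shows "blk (Suc m) (B m k) + 2 * (\<Sum>l<k. (cmod (B m l (p m l) (Suc m)))\<^sup>2) = blk (Suc m) (B m 0)"
  using a(3)
proof (induction k)
  case 0 then show ?case by simp
next
  case (Suc k)
  then show ?case using blk_col_step[of m k] a by (simp add: sum_distrib_left)
qed

lemma col_pres_phase:
  assumes a: "1 \<le> m" "m < n" "k \<le> m" "Suc m < J" "J \<le> n"
  shows "col J (B m k) = col J (B m 0)"
  using a(3)
proof (induction k)
  case 0 then show ?case by simp
next
  case (Suc k)
  have k: "k < m" using Suc by simp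
  have "col J (B m (Suc k)) = col J (B m k)"
    using col_step[where i="p m k" and j="Suc m" and J=J and n=n and X="B m k" and p="ph (tri m + k)" and a="al (tri m + k)"]
      p_in[OF a(1,2) k] a B_step[OF a(1,2) k] by auto
  then show ?case using Suc by simp
qed

lemma col_pres:
  "1 \<le> m \<Longrightarrow> m < J \<Longrightarrow> J \<le> n \<Longrightarrow> col J (As (tri m)) = col J (As 0)"
proof (induction m)
  case 0 then show ?case by simp
next
  case (Suc m)
  show ?case
  proof (cases "m = 0")
    case True then show ?thesis by (simp add: tri_def)
  next
    case False
    then have m1: "1 \<le> m" by simp
    have "col J (As (tri (Suc m))) = col J (B m m)" by (simp add: B_def tri_Suc)
    also have "\<dots> = col J (B m 0)" using col_pres_phase[of m m J] Suc.prems m1 by auto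
    also have "\<dots> = col J (As (tri m))" by (simp add: B_def)
    also have "\<dots> = col J (As 0)" using Suc.IH m1 Suc.prems by simp
    finally show ?thesis .
  qed
qed

definition R :: "nat \<Rightarrow> nat \<Rightarrow> nat set" where "R m l = {1..m} - p m ` {..<l}"

lemma R_Suc: "r \<in> R m (Suc l) \<Longrightarrow> r \<in> R m l \<and> r \<noteq> p m l"
  unfolding R_def by auto

lemma p_R: "1 \<le> m \<Longrightarrow> m < n \<Longrightarrow> l < m \<Longrightarrow> p m l \<in> R m l"
proof -
  assume a: "1 \<le> m" "m < n" "l < m"
  have "p m l \<notin> p m ` {..<l}"
  proof
    assume "p m l \<in> p m ` {..<l}"
    then obtain l' where "l' < l" "p m l = p m l'" by auto
    then show False using p_inj[OF a(1,2) a(3), of l'] a by simp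
  qed
  then show ?thesis unfolding R_def using p_in[OF a] by simp
qed

lemma unch:
  assumes a: "1 \<le> m" "m < n"
  shows "l \<le> m \<Longrightarrow> r \<in> R m l \<Longrightarrow> q \<in> R m l \<Longrightarrow> B m l r q = B m 0 r q"
proof (induction l)
  case 0 then show ?case by simp
next
  case (Suc l)
  have l: "l < m" using Suc by simp
  have r: "r \<in> R m l" "r \<noteq> p m l" and q: "q \<in> R m l" "q \<noteq> p m l" using R_Suc Suc.prems by auto
  have rn: "r \<in> {1..n}" "r \<noteq> Suc m" "q \<in> {1..n}" "q \<noteq> Suc m" using r q a unfolding R_def by auto
  have "B m (Suc l) r q = B m l r q"
    unfolding B_step[OF a l] using rn r q by (simp add: ma_other mm_other)
  then show ?case using Suc.IH l r q by simp
qed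

lemma lowcol:
  assumes a: "1 \<le> m" "m < n"
  shows "l \<le> m \<Longrightarrow> r \<in> R m l \<Longrightarrow>
    \<nu> ^ l * cmod (B m 0 r (Suc m)) - (\<Sum>l'<l. cmod (B m 0 r (p m l'))) \<le> cmod (B m l r (Suc m))"
proof (induction l)
  case 0 then show ?case by simp
next
  case (Suc l)
  have l: "l < m" using Suc by simp
  have r: "r \<in> R m l" "r \<noteq> p m l" using R_Suc Suc.prems by auto
  have rn: "r \<in> {1..n}" "r \<noteq> Suc m" using r a unfolding R_def by auto
  have pn: "p m l \<noteq> Suc m" "p m l \<in> {1..n}" "Suc m \<in> {1..n}" using p_in[OF a l] a by auto
  have e: "B m (Suc l) r (Suc m) = - exp (\<i> * of_real (al (tri m + l))) * of_real (sin (ph (tri m + l))) * B m l r (p m l)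
      + of_real (cos (ph (tri m + l))) * B m l r (Suc m)"
    unfolding B_step[OF a l] using rn r pn by (simp add: ma_other mm_j)
  have st: "\<nu> * cmod (B m l r (Suc m)) - cmod (B m l r (p m l)) \<le> cmod (B m (Suc l) r (Suc m))"
    unfolding e by (rule lowb) (use cosA[OF a l] nupos in auto)
  have u: "B m l r (p m l) = B m 0 r (p m l)" using unch[OF a, of l r "p m l"] l r p_R[OF a l] by simp
  have IH: "\<nu> ^ l * cmod (B m 0 r (Suc m)) - (\<Sum>l'<l. cmod (B m 0 r (p m l'))) \<le> cmod (B m l r (Suc m))"
    using Suc.IH l r by simp
  define S where "S = (\<Sum>l'<l. cmod (B m 0 r (p m l')))"
  have S0: "0 \<le> S" unfolding S_def by (intro sum_nonneg) auto
  have f1: "\<nu> * (\<nu> ^ l * cmod (B m 0 r (Suc m)) - S) \<le> \<nu> * cmod (B m l r (Suc m))"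
    using IH nupos unfolding S_def by (intro mult_left_mono) auto
  have f2: "\<nu> * S \<le> S" by (rule mult_left_le_one_le) (use S0 nule nupos in auto)
  have sS: "(\<Sum>l'<Suc l. cmod (B m 0 r (p m l'))) = S + cmod (B m 0 r (p m l))" by (simp add: S_def)
  have pw: "\<nu> ^ Suc l * cmod (B m 0 r (Suc m)) = \<nu> * (\<nu> ^ l * cmod (B m 0 r (Suc m)))" by simp
  have f3: "\<nu> * (\<nu> ^ l * cmod (B m 0 r (Suc m)) - S) = \<nu> * (\<nu> ^ l * cmod (B m 0 r (Suc m))) - \<nu> * S"
    by (simp add: right_diff_distrib)
  show ?case unfolding sS pw using f1 f2 f3 st[unfolded u] by linarith
qed

lemma pivb:
  assumes a: "1 \<le> m" "m < n" "l < m"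
  shows "\<nu> ^ m * cmod (B m 0 (p m l) (Suc m)) \<le> cmod (B m l (p m l) (Suc m)) + m * sqrt (blk m (B m 0))"
proof -
  have L: "\<nu> ^ l * cmod (B m 0 (p m l) (Suc m)) - (\<Sum>l'<l. cmod (B m 0 (p m l) (p m l'))) \<le> cmod (B m l (p m l) (Suc m))"
    using lowcol[OF a(1,2), of l "p m l"] a p_R[OF a] by simp
  have "(\<Sum>l'<l. cmod (B m 0 (p m l) (p m l'))) \<le> (\<Sum>l'<l. sqrt (blk m (B m 0)))"
  proof (intro sum_mono)
    fix l' assume "l' \<in> {..<l}"
    then have l': "l' < l" by simp
    then have "l' < m" using a by simp
    moreover have "p m l \<noteq> p m l'"
    proof
      assume "p m l = p m l'"
      then have "l = l'" using p_inj[OF a(1,2) a(3) \<open>l' < m\<close>] by simp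
      then show False using l' by simp
    qed
    ultimately have "l' < m" "p m l \<noteq> p m l'" by auto
    then show "cmod (B m 0 (p m l) (p m l')) \<le> sqrt (blk m (B m 0))"
      using p_in[OF a(1,2)] a by (intro entry_le_blk) auto
  qed
  also have "\<dots> \<le> m * sqrt (blk m (B m 0))" using a by (simp add: mult_right_mono blk_nonneg)
  finally have S: "(\<Sum>l'<l. cmod (B m 0 (p m l) (p m l'))) \<le> m * sqrt (blk m (B m 0))" .
  have "\<nu> ^ m \<le> \<nu> ^ l" using a nupos nule by (intro power_decreasing) auto
  then have "\<nu> ^ m * cmod (B m 0 (p m l) (Suc m)) \<le> \<nu> ^ l * cmod (B m 0 (p m l) (Suc m))"
    by (intro mult_right_mono) auto
  then show ?thesis using L S by linarith
qed

lemma col_reindex: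
  assumes a: "1 \<le> m" "m < n"
  shows "col (Suc m) X = (\<Sum>l<m. (cmod (X (p m l) (Suc m)))\<^sup>2)"
proof -
  have b1: "bij_betw Suc {..<m} {1..<Suc m}"
    unfolding bij_betw_def by (simp add: image_Suc_lessThan atLeastLessThanSuc_atLeastAtMost)
  have b2: "bij_betw (\<tau> (Suc m)) {1..<Suc m} {1..<Suc m}"
    using perm[OF a] by (rule permutes_imp_bij)
  have "bij_betw (p m) {..<m} {1..<Suc m}"
    unfolding p_def using bij_betw_trans[OF b1 b2] by (simp add: comp_def)
  then show ?thesis unfolding col_def
    by (rule sum.reindex_bij_betw[symmetric, where g="\<lambda>r. (cmod (X r (Suc m)))\<^sup>2"])
qed

lemma colbound:
  assumes a: "1 \<le> m" "m < n"
  shows "\<nu> ^ (2*m) * col (Suc m) (B m 0) \<le> 2 * (\<Sum>l<m. (cmod (B m l (p m l) (Suc m)))\<^sup>2) + 2 * real m ^ 3 * blk m (B m 0)"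
proof -
  let ?b = "blk m (B m 0)"
  have b0: "0 \<le> ?b" by (rule blk_nonneg)
  have t: "\<nu> ^ (2*m) * (cmod (B m 0 (p m l) (Suc m)))\<^sup>2 \<le> 2 * (cmod (B m l (p m l) (Suc m)))\<^sup>2 + 2 * real m ^ 2 * ?b"
    if l: "l < m" for l
  proof -
    let ?x = "\<nu> ^ m * cmod (B m 0 (p m l) (Suc m))" let ?y = "cmod (B m l (p m l) (Suc m))"
    let ?z = "real m * sqrt ?b"
    have h: "?x \<le> ?y + ?z" using pivb[OF a l] by simp
    have x0: "0 \<le> ?x" using nupos by simp
    have "?x\<^sup>2 \<le> (?y + ?z)\<^sup>2" using h x0 by (intro power_mono) auto
    also have "\<dots> \<le> 2 * ?y\<^sup>2 + 2 * ?z\<^sup>2"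
    proof -
      have "2 * ?y\<^sup>2 + 2 * ?z\<^sup>2 - (?y + ?z)\<^sup>2 = (?y - ?z)\<^sup>2" by (simp add: power2_eq_square algebra_simps)
      moreover have "0 \<le> (?y - ?z)\<^sup>2" by simp
      ultimately show ?thesis by linarith
    qed
    also have "?z\<^sup>2 = real m ^ 2 * ?b" using b0 by (simp add: power_mult_distrib)
    finally have F: "?x\<^sup>2 \<le> 2 * ?y\<^sup>2 + 2 * (real m ^ 2 * ?b)" .
    have X: "?x\<^sup>2 = \<nu> ^ (2*m) * (cmod (B m 0 (p m l) (Suc m)))\<^sup>2"
      by (simp add: power_mult_distrib power_even_eq)
    show ?thesis using F unfolding X by linarith
  qed
  have "\<nu> ^ (2*m) * col (Suc m) (B m 0) = (\<Sum>l<m. \<nu> ^ (2*m) * (cmod (B m 0 (p m l) (Suc m)))\<^sup>2)"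
    unfolding col_reindex[OF a] by (simp add: sum_distrib_left)
  also have "\<dots> \<le> (\<Sum>l<m. 2 * (cmod (B m l (p m l) (Suc m)))\<^sup>2 + 2 * real m ^ 2 * ?b)"
    using t by (intro sum_mono) auto
  also have "\<dots> = 2 * (\<Sum>l<m. (cmod (B m l (p m l) (Suc m)))\<^sup>2) + 2 * real m ^ 3 * ?b"
    by (simp add: sum.distrib sum_distrib_left power3_eq_cube power2_eq_square algebra_simps)
  finally show ?thesis .
qed

end

fun dl :: "real \<Rightarrow> nat \<Rightarrow> real" where
  "dl v 0 = 1"
| "dl v (Suc m) = (if m = 0 then 1 else dl v m * v ^ (2*m) / (8 * real m ^ 3))"

lemma dl_pos: "0 < v \<Longrightarrow> 0 < dl v m"
  by (induction m) auto

lemma dl_le1: "0 < v \<Longrightarrow> v \<le> 1 \<Longrightarrow> dl v m \<le> 1"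
proof (induction m)
  case 0 then show ?case by simp
next
  case (Suc m)
  show ?case
  proof (cases "m = 0")
    case False
    have q: "v ^ (2*m) \<le> 1" using Suc.prems by (simp add: power_le_one)
    have "1 \<le> real m ^ 3" using False by (simp add: one_le_power)
    then have K: "1 \<le> 8 * real m ^ 3" by simp
    have "v ^ (2*m) / (8 * real m ^ 3) \<le> 1" using q K by (simp add: divide_le_eq)
    moreover have "0 \<le> v ^ (2*m) / (8 * real m ^ 3)" using Suc.prems by simp
    ultimately have "dl v m * (v ^ (2*m) / (8 * real m ^ 3)) \<le> 1 * 1"
      using Suc dl_pos[of v m] by (intro mult_mono) auto
    then show ?thesis using False by simp
  qed simp
qed

lemma arith_step:
  fixes d q K b b0 C P F :: real
  assumes "0 < d" "d \<le> 1" "0 < q" "q \<le> 1" "1 \<le> K" "0 \<le> b" "0 \<le> b0" "b \<le> (1 - d) * b0"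
    "0 \<le> C" "0 \<le> P" "q * C \<le> 2 * P + 2 * K * b" "F + 2 * P = b + 2 * C"
  shows "F \<le> (1 - d * q / (8 * K)) * (b0 + 2 * C)"
proof -
  define \<theta> where "\<theta> = d / (4 * K)"
  have th0: "0 < \<theta>" "\<theta> \<le> 1" using assms unfolding \<theta>_def by (auto simp: divide_le_eq)
  have "F = b + 2 * C - 2 * P" using assms by simp
  also have "\<dots> \<le> b + 2 * C - \<theta> * (2 * P)" using th0 assms by (simp add: mult_left_le_one_le)
  also have "\<dots> \<le> b + 2 * C - \<theta> * (q * C - 2 * K * b)"
    using th0 assms by (smt (verit) mult_left_mono)
  also have "\<dots> = (1 + 2 * \<theta> * K) * b + (2 - \<theta> * q) * C" by (simp add: algebra_simps)
  also have "2 * \<theta> * K = d / 2" using assms unfolding \<theta>_def by simp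
  also have "\<theta> * q = 2 * (d * q / (8 * K))" unfolding \<theta>_def by simp
  finally have F1: "F \<le> (1 + d / 2) * b + (2 - 2 * (d * q / (8 * K))) * C" .
  have "(1 + d / 2) * b \<le> (1 + d / 2) * ((1 - d) * b0)" using assms by (intro mult_left_mono) auto
  also have "\<dots> \<le> (1 - d / 2) * b0"
  proof -
    have "(1 + d / 2) * (1 - d) \<le> 1 - d / 2" using assms by (simp add: algebra_simps power2_eq_square)
    then show ?thesis using assms by (simp add: mult.assoc[symmetric] mult_right_mono)
  qed
  also have "\<dots> \<le> (1 - d * q / (8 * K)) * b0"
  proof -
    have "d * q / (8 * K) \<le> d / 2"
    proof -
      have "d * q \<le> d * 1" using assms by (intro mult_left_mono) auto
      also have "\<dots> \<le> d / 2 * (8 * K)" using assms by simp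
      finally show ?thesis using assms by (simp add: divide_le_eq)
    qed
    then show ?thesis using assms by (intro mult_right_mono) auto
  qed
  finally have "(1 + d / 2) * b \<le> (1 - d * q / (8 * K)) * b0" .
  moreover have ex: "(1 - x) * (b0 + 2 * C) = (1 - x) * b0 + (2 - 2 * x) * C" for x
    by (simp add: algebra_simps)
  ultimately show ?thesis using F1 ex[of "d * q / (8 * K)"] by linarith
qed

context jac begin

lemma blk1: "blk (Suc 0) X = 0" by (simp add: blk_def)

lemma main:
  "1 \<le> m \<Longrightarrow> m \<le> n \<Longrightarrow> blk m (As (tri m)) \<le> (1 - dl \<nu> m) * blk m (As 0)"
proof (induction m)
  case 0 then show ?case by simp
next
  case (Suc m)
  show ?case
  proof (cases "m = 0")
    case True then show ?thesis by (simp add: blk1)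
  next
    case False
    then have a: "1 \<le> m" "m < n" using Suc.prems by auto
    have IH: "blk m (As (tri m)) \<le> (1 - dl \<nu> m) * blk m (As 0)" using Suc.IH a by simp
    have B0: "B m 0 = As (tri m)" by (simp add: B_def)
    have Bm: "B m m = As (tri (Suc m))" by (simp add: B_def tri_Suc)
    have hB: "hermitian n (B m 0)" using B_herm a by simp
    have h0: "hermitian n (As 0)" using hermA by simp
    have C: "col (Suc m) (B m 0) = col (Suc m) (As 0)" unfolding B0 using col_pres[of m "Suc m"] a by simp
    have S1: "blk (Suc m) (B m m) + 2 * (\<Sum>l<m. (cmod (B m l (p m l) (Suc m)))\<^sup>2) = blk (Suc m) (B m 0)"
      using blk_col_sum[OF a] by simp
    have S2: "blk (Suc m) (B m 0) = blk m (B m 0) + 2 * col (Suc m) (B m 0)"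
      using blk_Suc[OF hB] a by simp
    have S3: "blk (Suc m) (As 0) = blk m (As 0) + 2 * col (Suc m) (As 0)"
      using blk_Suc[OF h0] a by simp
    have cb: "\<nu> ^ (2*m) * col (Suc m) (B m 0) \<le> 2 * (\<Sum>l<m. (cmod (B m l (p m l) (Suc m)))\<^sup>2) + 2 * real m ^ 3 * blk m (B m 0)"
      by (rule colbound[OF a])
    have "blk (Suc m) (B m m) \<le> (1 - dl \<nu> m * \<nu> ^ (2*m) / (8 * real m ^ 3)) * (blk m (As 0) + 2 * col (Suc m) (As 0))"
    proof (rule arith_step[where P="\<Sum>l<m. (cmod (B m l (p m l) (Suc m)))\<^sup>2" and b="blk m (B m 0)"])
      show "0 < dl \<nu> m" using dl_pos nupos by simp
      show "dl \<nu> m \<le> 1" using dl_le1 nupos nule by simp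
      show "0 < \<nu> ^ (2*m)" using nupos by simp
      show "\<nu> ^ (2*m) \<le> 1" using nupos nule by (simp add: power_le_one)
      show "1 \<le> real m ^ 3" using a by (simp add: one_le_power)
      show "0 \<le> blk m (B m 0)" by (rule blk_nonneg)
      show "0 \<le> blk m (As 0)" by (rule blk_nonneg)
      show "blk m (B m 0) \<le> (1 - dl \<nu> m) * blk m (As 0)" using IH B0 by simp
      show "0 \<le> col (Suc m) (As 0)" unfolding col_def by (intro sum_nonneg) auto
      show "0 \<le> (\<Sum>l<m. (cmod (B m l (p m l) (Suc m)))\<^sup>2)" by (intro sum_nonneg) auto
      show "\<nu> ^ (2*m) * col (Suc m) (As 0) \<le> 2 * (\<Sum>l<m. (cmod (B m l (p m l) (Suc m)))\<^sup>2) + 2 * real m ^ 3 * blk m (B m 0)"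
        using cb C by simp
      show "blk (Suc m) (B m m) + 2 * (\<Sum>l<m. (cmod (B m l (p m l) (Suc m)))\<^sup>2) = blk m (B m 0) + 2 * col (Suc m) (As 0)"
        using S1 S2 C by simp
    qed
    then show ?thesis using False Bm S3 by simp
  qed
qed

end



definition colord :: "(nat \<Rightarrow> nat \<Rightarrow> nat) \<Rightarrow> nat \<Rightarrow> (nat \<times> nat) list" where
  "colord \<tau> N = concat (map (\<lambda>j. map (\<lambda>i. (\<tau> j i, j)) [1..<j]) [2..<Suc N])"

lemma colord_Suc: "1 \<le> N \<Longrightarrow> colord \<tau> (Suc N) = colord \<tau> N @ map (\<lambda>i. (\<tau> (Suc N) i, Suc N)) [1..<Suc N]"
  unfolding colord_def by simp

lemma colord_len: "length (colord \<tau> N) = tri N"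
proof (induction N)
  case 0 then show ?case by (simp add: colord_def tri_def)
next
  case (Suc N)
  show ?case
  proof (cases "N = 0")
    case True then show ?thesis by (simp add: colord_def tri_def)
  next
    case False
    then show ?thesis using Suc by (simp add: colord_Suc tri_Suc)
  qed
qed

lemma colord_nth: "1 \<le> m \<Longrightarrow> m < N \<Longrightarrow> l < m \<Longrightarrow> colord \<tau> N ! (tri m + l) = (\<tau> (Suc m) (Suc l), Suc m)"
proof (induction N)
  case 0 then show ?case by simp
next
  case (Suc N)
  have N1: "1 \<le> N" using Suc.prems by simp
  show ?case
  proof (cases "m < N")
    case True
    have "tri m + l < tri (Suc m)" using Suc.prems by (simp add: tri_Suc)
    also have "\<dots> \<le> tri N" using True by (intro tri_mono) simp
    finally have "tri m + l < length (colord \<tau> N)" by (simp add: colord_len)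
    then show ?thesis using Suc True N1 by (simp add: colord_Suc nth_append)
  next
    case False
    then have mN: "m = N" using Suc.prems by simp
    have e: "map (\<lambda>i. (\<tau> (Suc N) i, Suc N)) [1..<Suc N] ! l = (\<tau> (Suc N) (Suc l), Suc N)"
      using Suc.prems mN by (simp add: nth_upt del: upt_Suc)
    then show ?thesis using mN N1 Suc.prems by (simp add: colord_Suc nth_append colord_len del: upt_Suc)
  qed
qed

lemma herm_all:
  assumes "hermitian n (As 0)"
    and "\<And>k. k < K \<Longrightarrow> \<exists>U. As (Suc k) = mmult n (cadj U) (mmult n (As k) U)"
  shows "k \<le> K \<Longrightarrow> hermitian n (As k)"
proof (induction k)
  case 0 then show ?case using assms by simp
next
  case (Suc k)
  have "k < K" using Suc.prems by simp
  then obtain U where "As (Suc k) = mmult n (cadj U) (mmult n (As k) U)" using assms(2) by blast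
  then show ?case using herm_pres Suc by simp
qed

theorem theorem3p1:
  fixes n :: nat and \<nu> :: real
  assumes "n \<ge> 2" and "\<nu> > 0"
  shows "\<exists>\<gamma>::real. 0 \<le> \<gamma> \<and> \<gamma> < 1 \<and>
           (\<forall>A A' ord. hermitian n A \<longrightarrow> ord \<in> col_orderings n \<longrightarrow>
              jacobi_one_cycle n ord \<nu> A A' \<longrightarrow>
              (off_norm n A')\<^sup>2 \<le> \<gamma> * (off_norm n A)\<^sup>2)"
proof (intro exI conjI allI impI)
  show "0 \<le> max 0 (1 - dl \<nu> n)" by simp
  show "max 0 (1 - dl \<nu> n) < 1" using dl_pos[OF assms(2)] by simp
  fix A A' ord
  assume hA: "hermitian n A" and ordc: "ord \<in> col_orderings n" and jc: "jacobi_one_cycle n ord \<nu> A A'"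
  obtain \<tau>0 where ordeq: "ord = (1,2) # concat (map (\<lambda>j. map (\<lambda>i. (\<tau>0 j i, j)) [1..<j]) [3..<Suc n])"
    and pm: "\<forall>j\<in>{3..n}. \<tau>0 j permutes {1..<j}"
    using ordc unfolding col_orderings_def by blast
  obtain As :: "nat \<Rightarrow> cmatrix" and ph al :: "nat \<Rightarrow> real" where
    A0: "As 0 = A" and
    st: "\<forall>k < n * (n - 1) div 2.
           (let U = rot (fst (ord ! k)) (snd (ord ! k)) (ph k) (al k) in
              As (Suc k) = mmult n (cadj U) (mmult n (As k) U)) \<and>
           As (Suc k) (fst (ord ! k)) (snd (ord ! k)) = 0 \<and>
           \<bar>cos (ph k)\<bar> \<ge> \<nu>" and
    A'eq: "A' = As (n * (n - 1) div 2)"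
    using jc unfolding jacobi_one_cycle_def by blast
  have trin: "tri n = n * (n - 1) div 2" by (simp add: tri_def)
  have tpos: "0 < tri n"
  proof -
    have "tri 2 \<le> tri n" using assms(1) by (rule tri_mono)
    moreover have "tri 2 = 1" by (simp add: tri_def)
    ultimately show ?thesis by simp
  qed
  have nule: "\<nu> \<le> 1"
  proof -
    have "\<nu> \<le> \<bar>cos (ph 0)\<bar>" using st tpos trin by auto
    also have "\<dots> \<le> 1" by simp
    finally show ?thesis .
  qed
  define \<tau> where "\<tau> j = (if j = 2 then id else \<tau>0 j)" for j
  have ordeq2: "ord = colord \<tau> n"
  proof -
    have up: "[2..<Suc n] = 2 # [3..<Suc n]" using assms(1) by (simp add: upt_rec)
    have "map (\<lambda>j. map (\<lambda>i. (\<tau> j i, j)) [1..<j]) [3..<Suc n] = map (\<lambda>j. map (\<lambda>i. (\<tau>0 j i, j)) [1..<j]) [3..<Suc n]"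
      unfolding \<tau>_def by (intro map_cong) auto
    note mq = this
    have g2: "map (\<lambda>i. (\<tau> 2 i, 2)) [1..<2] = [(1::nat,2::nat)]"
      by (simp add: \<tau>_def upt_rec)
    have "colord \<tau> n = concat (map (\<lambda>j. map (\<lambda>i. (\<tau> j i, j)) [1..<j]) (2 # [3..<Suc n]))"
      unfolding colord_def up ..
    also have "\<dots> = [(1,2)] @ concat (map (\<lambda>j. map (\<lambda>i. (\<tau> j i, j)) [1..<j]) [3..<Suc n])"
      by (simp only: list.map concat.simps g2)
    also have "\<dots> = ord" unfolding mq ordeq by simp
    finally show ?thesis by simp
  qed
  have ordnth: "ord ! (tri m + l) = (\<tau> (Suc m) (Suc l), Suc m)" if "1 \<le> m" "m < n" "l < m" for m l
    unfolding ordeq2 using colord_nth that by simp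
  have kbound: "tri m + l < n * (n - 1) div 2" if "1 \<le> m" "m < n" "l < m" for m l
  proof -
    have "tri m + l < tri (Suc m)" using that by (simp add: tri_Suc)
    also have "\<dots> \<le> tri n" using that by (intro tri_mono) simp
    finally show ?thesis by (simp add: trin)
  qed
  interpret J: jac n \<nu> As ph al \<tau>
  proof
    show "0 < \<nu>" by (rule assms(2))
    show "\<nu> \<le> 1" by (rule nule)
    show "\<tau> (Suc m) permutes {1..<Suc m}" if "1 \<le> m" "m < n" for m
    proof (cases "m = 1")
      case True then show ?thesis by (simp add: \<tau>_def permutes_id)
    next
      case False then show ?thesis using pm that by (simp add: \<tau>_def)
    qed
    show "hermitian n (As k)" if "k \<le> tri n" for k
    proof (rule herm_all[where K="tri n"])
      show "hermitian n (As 0)" using hA A0 by simp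
      show "\<exists>U. As (Suc k) = mmult n (cadj U) (mmult n (As k) U)" if "k < tri n" for k
        using st that trin by (auto simp: Let_def)
    qed (rule that)
    show "As (Suc (tri m + l)) = mmult n (cadj (rot (\<tau> (Suc m) (Suc l)) (Suc m) (ph (tri m + l)) (al (tri m + l))))
        (mmult n (As (tri m + l)) (rot (\<tau> (Suc m) (Suc l)) (Suc m) (ph (tri m + l)) (al (tri m + l))))"
      if "1 \<le> m" "m < n" "l < m" for m l
      using st kbound[OF that] ordnth[OF that] by (auto simp: Let_def)
    show "As (Suc (tri m + l)) (\<tau> (Suc m) (Suc l)) (Suc m) = 0" if "1 \<le> m" "m < n" "l < m" for m l
      using st kbound[OF that] ordnth[OF that] by auto
    show "\<nu> \<le> \<bar>cos (ph (tri m + l))\<bar>" if "1 \<le> m" "m < n" "l < m" for m l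
      using st kbound[OF that] by auto
  qed
  have M: "blk n (As (tri n)) \<le> (1 - dl \<nu> n) * blk n (As 0)"
    using J.main[of n] assms(1) by simp
  have on: "(off_norm n X)\<^sup>2 = blk n X" for X
    unfolding off_norm_def blk_def by (simp add: sum_nonneg)
  have "(1 - dl \<nu> n) * blk n (As 0) \<le> max 0 (1 - dl \<nu> n) * blk n (As 0)"
    by (intro mult_right_mono) (auto simp: blk_nonneg)
  then show "(off_norm n A')\<^sup>2 \<le> max 0 (1 - dl \<nu> n) * (off_norm n A)\<^sup>2"
    using M unfolding on A'eq A0[symmetric] trin[symmetric] by simp
qed

end
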